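(* Let $(C,\Delta_C,\varepsilon)$ be a coalgebra over a commutative field $K$ satisfying: (1) there exists $e\in C\setminus\{0\}$ with $\Delta_C(e)=e\otimes e$; (2) setting $\mathrm{Prim}(C)=\{x\in C:\Delta_C(x)=x\otimes e+e\otimes x\}$, there exists a linear map $L:\mathrm{Prim}(C)\to\mathcal L(C)$, $p\mapsto L_p$, such that (a) $L_p(e)=p$ for all $p\in\mathrm{Prim}(C)$, and (b) $\Delta_C(L_p(x))=L_p(x)\otimes e+(\mathrm{Id}\otimes L_p)\circ\Delta_C(x)$ for all $x\in C$; (3) setting $\tilde\Delta_C(x)=\Delta_C(x)-x\otimes e-e\otimes x$, $\tilde\Delta_C^1=\tilde\Delta_C$ and $\tilde\Delta_C^n=(\tilde\Delta_C^{n-1}\otimes\mathrm{Id})\circ\tilde\Delta_C$, for every $x\in\ker(\varepsilon)$ there exists $n\ge1$ with $\tilde\Delta_C^n(x)=0$. Then $C$ is isomorphic (as a coalgebra) to the tensor coalgebra $T(\mathrm{Prim}(C))$.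
   Context: For a vector space $V$ over $K$, the tensor coalgebra $T(V)=\bigoplus_{n\ge0}V^{\otimes n}$ has coproduct $\Delta(v_1\top\cdots\top v_n)=\sum_{k=0}^n(v_1\top\cdots\top v_k)\otimes(v_{k+1}\top\cdots\top v_n)$, where $v_1\top\cdots\top v_n$ denotes the tensor $v_1\otimes\cdots\otimes v_n\in V^{\otimes n}$ and the empty tensor is $1\in V^{\otimes0}=K$; its counit sends $1$ to $1$ and $V^{\otimes n}$ to $0$ for $n\ge1$. $\mathcal L(C)$ denotes the space of linear endomorphisms of $C$. *)

theory Defs
  imports Main "HOL.Vector_Spaces"
begin

text \<open>Tensors are represented dually: an element of V1 (x) ... (x) Vn (subspaces of C) is
 represented by the multilinear function it induces on n-tuples (lists) of linear functionals
 on C, made canonical by being 0 on every list that is not a list of n linear functionals.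
 Over a field this representation is faithful (injective).\<close>

definition lin_fun :: "('k::field \<Rightarrow> 'c::ab_group_add \<Rightarrow> 'c) \<Rightarrow> ('c \<Rightarrow> 'k) \<Rightarrow> bool" where
  "lin_fun scale f \<longleftrightarrow> Vector_Spaces.linear scale (*) f"

definition lin_list :: "('k::field \<Rightarrow> 'c::ab_group_add \<Rightarrow> 'c) \<Rightarrow> nat \<Rightarrow> ('c \<Rightarrow> 'k) list \<Rightarrow> bool" where
  "lin_list scale n fs \<longleftrightarrow> length fs = n \<and> (\<forall>f\<in>set fs. lin_fun scale f)"

definition ptens :: "('k::field \<Rightarrow> 'c::ab_group_add \<Rightarrow> 'c) \<Rightarrow> 'c list \<Rightarrow> ('c \<Rightarrow> 'k) list \<Rightarrow> 'k" where
  "ptens scale vs fs = (if lin_list scale (length vs) fs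
      then (\<Prod>i<length vs. (fs ! i) (vs ! i)) else 0)"

definition tensors :: "('k::field \<Rightarrow> 'c::ab_group_add \<Rightarrow> 'c) \<Rightarrow> 'c set \<Rightarrow> nat \<Rightarrow> (('c \<Rightarrow> 'k) list \<Rightarrow> 'k) set" where
  "tensors scale V n = {(\<lambda>fs. \<Sum>j<m. (c::nat \<Rightarrow> 'k) j * ptens scale ((vs::nat \<Rightarrow> 'c list) j) fs) | m c vs.
      \<forall>j<m. length (vs j) = n \<and> set (vs j) \<subseteq> V}"

definition coalgebra :: "('k::field \<Rightarrow> 'c::ab_group_add \<Rightarrow> 'c) \<Rightarrow> ('c \<Rightarrow> ('c \<Rightarrow> 'k) list \<Rightarrow> 'k)
    \<Rightarrow> ('c \<Rightarrow> 'k) \<Rightarrow> bool" where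
  "coalgebra scale \<Delta> \<epsilon> \<longleftrightarrow>
     vector_space scale \<and>
     (\<forall>x. \<Delta> x \<in> tensors scale UNIV 2) \<and>
     (\<forall>x y fs. \<Delta> (x + y) fs = \<Delta> x fs + \<Delta> y fs) \<and>
     (\<forall>a x fs. \<Delta> (scale a x) fs = a * \<Delta> x fs) \<and>
     lin_fun scale \<epsilon> \<and>
     (\<forall>x f g h. lin_fun scale f \<and> lin_fun scale g \<and> lin_fun scale h \<longrightarrow>
        \<Delta> x [(\<lambda>a. \<Delta> a [f, g]), h] = \<Delta> x [f, (\<lambda>b. \<Delta> b [g, h])]) \<and>
     (\<forall>x f. lin_fun scale f \<longrightarrow> \<Delta> x [\<epsilon>, f] = f x \<and> \<Delta> x [f, \<epsilon>] = f x)"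

definition prim :: "('k::field \<Rightarrow> 'c::ab_group_add \<Rightarrow> 'c) \<Rightarrow> ('c \<Rightarrow> ('c \<Rightarrow> 'k) list \<Rightarrow> 'k) \<Rightarrow> 'c \<Rightarrow> 'c set" where
  "prim scale \<Delta> e = {x. \<forall>fs. \<Delta> x fs = ptens scale [x, e] fs + ptens scale [e, x] fs}"

definition dtil :: "('c::ab_group_add \<Rightarrow> ('c \<Rightarrow> 'k::field) list \<Rightarrow> 'k) \<Rightarrow> 'c \<Rightarrow> 'c \<Rightarrow> ('c \<Rightarrow> 'k) \<Rightarrow> ('c \<Rightarrow> 'k) \<Rightarrow> 'k" where
  "dtil \<Delta> e x f g = \<Delta> x [f, g] - f x * g e - f e * g x"

text \<open>dtil_iter n = reduced coproduct iterated (n+1) times, i.e. tilde-Delta^(n+1),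
  evaluated on n+2 functionals: tilde-Delta^(n+1) = (tilde-Delta^n (x) Id) o tilde-Delta\<close>
fun dtil_iter :: "('c::ab_group_add \<Rightarrow> ('c \<Rightarrow> 'k::field) list \<Rightarrow> 'k) \<Rightarrow> 'c \<Rightarrow> nat \<Rightarrow> 'c \<Rightarrow> ('c \<Rightarrow> 'k) list \<Rightarrow> 'k" where
  "dtil_iter \<Delta> e 0 x fs = dtil \<Delta> e x (fs ! 0) (fs ! 1)"
| "dtil_iter \<Delta> e (Suc n) x fs = dtil \<Delta> e x (\<lambda>a. dtil_iter \<Delta> e n a (butlast fs)) (last fs)"

end

theory Submission
  imports Defs
begin


lemma vs_field: "vector_space ((*) :: 'k::field \<Rightarrow> 'k \<Rightarrow> 'k)"
  by unfold_locales (auto simp: algebra_simps)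

lemma lin_fun_mh: "lin_fun scale f \<Longrightarrow> module_hom scale (*) f"
  unfolding lin_fun_def by (simp add: module_hom_iff_linear)

lemma lin_funD:
  assumes "lin_fun scale f"
  shows "f (x + y) = f x + f y" "f (scale c x) = c * f x"
  using assms unfolding lin_fun_def linear_iff by auto

lemma lin_funI:
  assumes "vector_space scale" "\<And>x y. f (x + y) = f x + f y" "\<And>c x. f (scale c x) = c * f x"
  shows "lin_fun scale f"
  using assms unfolding lin_fun_def linear_iff by (auto simp: vs_field)

lemma lin_fun_comp:
  assumes "lin_fun scale f" "Vector_Spaces.linear scale scale p"
  shows "lin_fun scale (f \<circ> p)"
  using assms unfolding lin_fun_def by (rule Vector_Spaces.linear_compose[rotated])

lemma sum_split_nat: "(\<Sum>j<m1 + (m2::nat). f j) = (\<Sum>j<m1. f j) + (\<Sum>j<m2. f (m1 + j)) "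
  by (induct m2) (auto simp: add_ac)

lemma tensorsE:
  fixes scale :: "'k::field \<Rightarrow> 'c::ab_group_add \<Rightarrow> 'c"
  assumes "t \<in> tensors scale V n"
  obtains m and c :: "nat \<Rightarrow> 'k" and vs where "t = (\<lambda>fs. \<Sum>j<m. c j * ptens scale (vs j) fs)"
    "\<And>j. j < m \<Longrightarrow> length (vs j) = n" "\<And>j. j < m \<Longrightarrow> set (vs j) \<subseteq> V"
  using assms unfolding tensors_def by blast

lemma tensorsI:
  fixes scale :: "'k::field \<Rightarrow> 'c::ab_group_add \<Rightarrow> 'c" and c :: "nat \<Rightarrow> 'k"
  assumes "\<And>j. j < m \<Longrightarrow> length (vs j) = n" "\<And>j. j < m \<Longrightarrow> set (vs j) \<subseteq> V"
  shows "(\<lambda>fs. \<Sum>j<m. c j * ptens scale (vs j) fs) \<in> tensors scale V n"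
  unfolding tensors_def mem_Collect_eq
  by (rule exI[of _ m], rule exI[of _ c], rule exI[of _ vs]) (use assms in auto)

lemma tensors_zero: "(\<lambda>_. 0) \<in> tensors scale V n"
  unfolding tensors_def by (auto intro!: exI[of _ 0])

lemma tensors_ptens: "length vs = n \<Longrightarrow> set vs \<subseteq> V \<Longrightarrow> ptens scale vs \<in> tensors scale V n"
  using tensorsI[where m=1 and vs="\<lambda>_. vs" and n=n and V=V and scale=scale and c="\<lambda>_. 1"] by (simp add: lessThan_Suc)

lemma tensors_scale:
  assumes "t \<in> tensors scale V n"
  shows "(\<lambda>fs. a * t fs) \<in> tensors scale V n"
proof -
  obtain m :: nat and c vs where t: "t = (\<lambda>fs. \<Sum>j<m. c j * ptens scale (vs j) fs)"
    "\<And>j. j < m \<Longrightarrow> length (vs j) = n" "\<And>j. j < m \<Longrightarrow> set (vs j) \<subseteq> V"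
    using assms by (rule tensorsE) blast
  have "(\<lambda>fs. \<Sum>j<m. (a * c j) * ptens scale (vs j) fs) \<in> tensors scale V n"
    by (rule tensorsI) (use t in auto)
  then show ?thesis unfolding t by (simp add: sum_distrib_left mult.assoc)
qed

lemma tensors_add:
  assumes "t1 \<in> tensors scale V n" "t2 \<in> tensors scale V n"
  shows "(\<lambda>fs. t1 fs + t2 fs) \<in> tensors scale V n"
proof -
  obtain m1 :: nat and c1 vs1 where t1: "t1 = (\<lambda>fs. \<Sum>j<m1. c1 j * ptens scale (vs1 j) fs)"
    "\<And>j. j < m1 \<Longrightarrow> length (vs1 j) = n" "\<And>j. j < m1 \<Longrightarrow> set (vs1 j) \<subseteq> V"
    using assms(1) by (rule tensorsE) blast
  obtain m2 :: nat and c2 vs2 where t2: "t2 = (\<lambda>fs. \<Sum>j<m2. c2 j * ptens scale (vs2 j) fs)"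
    "\<And>j. j < m2 \<Longrightarrow> length (vs2 j) = n" "\<And>j. j < m2 \<Longrightarrow> set (vs2 j) \<subseteq> V"
    using assms(2) by (rule tensorsE) blast
  define c where "c j = (if j < m1 then c1 j else c2 (j - m1))" for j
  define vs where "vs j = (if j < m1 then vs1 j else vs2 (j - m1))" for j
  have "(\<lambda>fs. \<Sum>j<m1 + m2. c j * ptens scale (vs j) fs) \<in> tensors scale V n"
    by (rule tensorsI) (use t1 t2 in \<open>auto simp: vs_def\<close>)
  moreover have "(\<lambda>fs. \<Sum>j<m1 + m2. c j * ptens scale (vs j) fs) = (\<lambda>fs. t1 fs + t2 fs)"
    unfolding sum_split_nat t1 t2 by (auto simp: c_def vs_def)
  ultimately show ?thesis by simp
qed

lemma tensors_diff:
  assumes "t1 \<in> tensors scale V n" "t2 \<in> tensors scale V n"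
  shows "(\<lambda>fs. t1 fs - t2 fs) \<in> tensors scale V n"
  using tensors_add[OF assms(1) tensors_scale[OF assms(2), of "-1"]] by simp

lemma tensors_sum:
  assumes "finite I" "\<And>i. i \<in> I \<Longrightarrow> T i \<in> tensors scale V n"
  shows "(\<lambda>fs. \<Sum>i\<in>I. T i fs) \<in> tensors scale V n"
  using assms by (induct I rule: finite_induct) (auto intro: tensors_zero tensors_add)

lemma ptens_lin: "length vs = n \<Longrightarrow> lin_list scale n fs \<Longrightarrow>
    ptens scale vs fs = (\<Prod>i<n. (fs ! i) (vs ! i))"
  unfolding ptens_def by simp

lemma ptens_out: "length vs = n \<Longrightarrow> \<not> lin_list scale n fs \<Longrightarrow> ptens scale vs fs = 0"
  unfolding ptens_def by simp

lemma tensors_out: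
  assumes "t \<in> tensors scale V n" "\<not> lin_list scale n fs"
  shows "t fs = 0"
proof -
  obtain m :: nat and c vs where t: "t = (\<lambda>fs. \<Sum>j<m. c j * ptens scale (vs j) fs)"
    "\<And>j. j < m \<Longrightarrow> length (vs j) = n" "\<And>j. j < m \<Longrightarrow> set (vs j) \<subseteq> V"
    using assms(1) by (rule tensorsE) blast
  show ?thesis unfolding t by (auto intro!: sum.neutral simp: ptens_out t assms(2))
qed

lemma tensors_cong:
  assumes "t' \<in> tensors scale V n" "\<And>fs. lin_list scale n fs \<Longrightarrow> t fs = t' fs"
    "\<And>fs. \<not> lin_list scale n fs \<Longrightarrow> t fs = 0"
  shows "t \<in> tensors scale V n"
proof -
  have "t = t'" using assms tensors_out[OF assms(1)] by (metis ext)
  then show ?thesis using assms(1) by simp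
qed

lemma lin_list_update:
  "lin_list scale n fs \<Longrightarrow> lin_fun scale h \<Longrightarrow> lin_list scale n (fs[i := h])"
  unfolding lin_list_def using set_update_subset_insert by fastforce

lemma tensor_slot:
  assumes "t \<in> tensors scale V n" "lin_list scale n fs" "i < n"
  shows "\<exists>v. \<forall>h. lin_fun scale h \<longrightarrow> t (fs[i := h]) = h v"
proof -
  obtain m :: nat and c vs where t: "t = (\<lambda>fs. \<Sum>j<m. c j * ptens scale (vs j) fs)"
    "\<And>j. j < m \<Longrightarrow> length (vs j) = n" "\<And>j. j < m \<Longrightarrow> set (vs j) \<subseteq> V"
    using assms(1) by (rule tensorsE) blast
  define P where "P j = (\<Prod>l\<in>{..<n}-{i}. (fs ! l) (vs j ! l))" for j
  define v where "v = (\<Sum>j<m. scale (c j * P j) (vs j ! i))"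
  have "t (fs[i := h]) = h v" if h: "lin_fun scale h" for h
  proof -
    have ll: "lin_list scale n (fs[i := h])" using lin_list_update[OF assms(2) h] .
    have len: "length fs = n" using assms(2) by (simp add: lin_list_def)
    have "t (fs[i := h]) = (\<Sum>j<m. c j * (P j * h (vs j ! i)))"
    proof -
      have "ptens scale (vs j) (fs[i := h]) = P j * h (vs j ! i)" if "j < m" for j
      proof -
        have "ptens scale (vs j) (fs[i := h]) = (\<Prod>l<n. (fs[i := h] ! l) (vs j ! l))"
          using ptens_lin[OF t(2)[OF that] ll] .
        also have "\<dots> = (fs[i := h] ! i) (vs j ! i) * (\<Prod>l\<in>{..<n}-{i}. (fs[i := h] ! l) (vs j ! l))"
          using assms(3) by (subst prod.remove[of _ i]) auto
        also have "\<dots> = h (vs j ! i) * P j"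
          unfolding P_def using len assms(3) by (auto intro!: prod.cong)
        finally show ?thesis by simp
      qed
      then show ?thesis unfolding t by (auto intro!: sum.cong)
    qed
    also have "\<dots> = h v"
      unfolding v_def using lin_fun_mh[OF h]
      by (simp add: module_hom.sum module_hom.scale mult.assoc)
    finally show ?thesis .
  qed
  then show ?thesis by blast
qed



fun Rr :: "('c \<Rightarrow> ('c \<Rightarrow> 'k) list \<Rightarrow> 'k) \<Rightarrow> ('c \<Rightarrow> 'k) \<Rightarrow> 'c \<Rightarrow> ('c \<Rightarrow> 'k) list \<Rightarrow> 'k" where
  "Rr D ep x [] = ep x"
| "Rr D ep x (g # gs) = D x [\<lambda>a. Rr D ep a gs, g]"

definition RR :: "('c \<Rightarrow> ('c \<Rightarrow> 'k) list \<Rightarrow> 'k) \<Rightarrow> ('c \<Rightarrow> 'k) \<Rightarrow> 'c \<Rightarrow> ('c \<Rightarrow> 'k) list \<Rightarrow> 'k" where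
  "RR D ep x fs = Rr D ep x (rev fs)"

lemma RR_Nil[simp]: "RR D ep x [] = ep x" by (simp add: RR_def)
lemma RR_snoc[simp]: "RR D ep x (fs @ [g]) = D x [\<lambda>a. RR D ep a fs, g]"
  by (simp add: RR_def)

fun psir :: "('c \<Rightarrow> 'c \<Rightarrow> 'c) \<Rightarrow> 'c \<Rightarrow> 'c list \<Rightarrow> 'c" where
  "psir L e [] = e"
| "psir L e (p # ps) = L p (psir L e ps)"

definition psi :: "('c \<Rightarrow> 'c \<Rightarrow> 'c) \<Rightarrow> 'c \<Rightarrow> 'c list \<Rightarrow> 'c" where
  "psi L e ps = psir L e (rev ps)"

lemma psi_Nil[simp]: "psi L e [] = e" by (simp add: psi_def)
lemma psi_snoc[simp]: "psi L e (ps @ [p]) = L p (psi L e ps)" by (simp add: psi_def)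

definition EK :: "('k::field \<Rightarrow> 'c::ab_group_add \<Rightarrow> 'c) \<Rightarrow> 'c \<Rightarrow> ('c \<Rightarrow> 'k) list \<Rightarrow> bool" where
  "EK scale e hs \<longleftrightarrow> (\<forall>h\<in>set hs. lin_fun scale h \<and> h e = 0)"

locale coal = vector_space scale for scale :: "'k::field \<Rightarrow> 'c::ab_group_add \<Rightarrow> 'c" +
  fixes \<Delta> :: "'c \<Rightarrow> ('c \<Rightarrow> 'k) list \<Rightarrow> 'k" and \<epsilon> :: "'c \<Rightarrow> 'k"
  assumes Dten: "\<And>x. \<Delta> x \<in> tensors scale UNIV 2"
    and Dadd: "\<And>x y fs. \<Delta> (x + y) fs = \<Delta> x fs + \<Delta> y fs"
    and Dscale: "\<And>a x fs. \<Delta> (scale a x) fs = a * \<Delta> x fs"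
    and eps_lin: "lin_fun scale \<epsilon>"
    and coassoc: "\<And>x f g h. lin_fun scale f \<Longrightarrow> lin_fun scale g \<Longrightarrow> lin_fun scale h \<Longrightarrow>
        \<Delta> x [(\<lambda>a. \<Delta> a [f, g]), h] = \<Delta> x [f, (\<lambda>b. \<Delta> b [g, h])]"
    and counitL: "\<And>x f. lin_fun scale f \<Longrightarrow> \<Delta> x [\<epsilon>, f] = f x"
    and counitR: "\<And>x f. lin_fun scale f \<Longrightarrow> \<Delta> x [f, \<epsilon>] = f x"
begin

abbreviation "R \<equiv> RR \<Delta> \<epsilon>"

lemma vs: "vector_space scale" by unfold_locales

lemma lin_fun_zero: "lin_fun scale f \<Longrightarrow> f 0 = 0"
  using module_hom.zero[OF lin_fun_mh] by blast
lemma lin_fun_diff: "lin_fun scale f \<Longrightarrow> f (x - y) = f x - f y"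
  using module_hom.diff[OF lin_fun_mh] by blast
lemma lin_fun_add: "lin_fun scale f \<Longrightarrow> f (x + y) = f x + f y"
  using module_hom.add[OF lin_fun_mh] by blast
lemma lin_fun_scale: "lin_fun scale f \<Longrightarrow> f (scale c x) = c * f x"
  using module_hom.scale[OF lin_fun_mh] by blast

lemma lin_fun_comb: "lin_fun scale f \<Longrightarrow> lin_fun scale g \<Longrightarrow> lin_fun scale (\<lambda>a. f a - c * g a)"
  by (rule lin_funI[OF vs]) (auto simp: lin_fun_add lin_fun_scale algebra_simps)

lemma D_lin: "lin_fun scale (\<lambda>a. \<Delta> a fs)"
  by (rule lin_funI[OF vs]) (auto simp: Dadd Dscale)

lemma R_add: "R (x + y) fs = R x fs + R y fs"
  by (induct fs arbitrary: x y rule: rev_induct) (auto simp: Dadd lin_fun_add[OF eps_lin])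

lemma R_scale: "R (scale c x) fs = c * R x fs"
  by (induct fs arbitrary: x rule: rev_induct) (auto simp: Dscale lin_fun_scale[OF eps_lin])

lemma R_lin: "lin_fun scale (\<lambda>a. R a fs)"
  by (rule lin_funI[OF vs]) (auto simp: R_add R_scale)

lemma R_single: "lin_fun scale g \<Longrightarrow> R x [g] = g x"
  using RR_snoc[of \<Delta> \<epsilon> x "[]" g] counitL by (simp add: eta_contract_eq)

lemma R_single_fun: "lin_fun scale g \<Longrightarrow> (\<lambda>a. R a [g]) = g"
  using R_single by auto

lemma R_split:
  assumes "\<forall>g\<in>set hs2. lin_fun scale g"
  shows "\<Delta> x [\<lambda>a. R a hs1, \<lambda>b. R b hs2] = R x (hs1 @ hs2)"
  using assms
proof (induct hs2 arbitrary: x rule: rev_induct)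
  case Nil
  have "(\<lambda>b. R b []) = \<epsilon>" by auto
  then show ?case using counitR[OF R_lin] by simp
next
  case (snoc g hs2)
  have g: "lin_fun scale g" using snoc.prems by auto
  have "\<Delta> x [\<lambda>a. R a hs1, \<lambda>b. R b (hs2 @ [g])] = \<Delta> x [\<lambda>a. R a hs1, \<lambda>b. \<Delta> b [\<lambda>a. R a hs2, g]]"
    by simp
  also have "\<dots> = \<Delta> x [\<lambda>a. \<Delta> a [\<lambda>a. R a hs1, \<lambda>a. R a hs2], g]"
    using coassoc[OF R_lin R_lin g] by simp
  also have "(\<lambda>a. \<Delta> a [\<lambda>a. R a hs1, \<lambda>a. R a hs2]) = (\<lambda>a. R a (hs1 @ hs2))"
    using snoc by auto
  finally show ?case using RR_snoc[of \<Delta> \<epsilon> x "hs1 @ hs2" g] by simp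
qed

lemma R_merge0:
  assumes "lin_fun scale g1" "lin_fun scale g2"
  shows "R x (hs1 @ [g1, g2]) = R x (hs1 @ [\<lambda>b. \<Delta> b [g1, g2]])"
proof -
  have "R x (hs1 @ [g1, g2]) = R x ((hs1 @ [g1]) @ [g2])" by simp
  also have "\<dots> = \<Delta> x [\<lambda>c. R c (hs1 @ [g1]), g2]" by (rule RR_snoc)
  also have "\<dots> = \<Delta> x [\<lambda>c. \<Delta> c [\<lambda>a. R a hs1, g1], g2]" by (simp only: RR_snoc)
  also have "\<dots> = \<Delta> x [\<lambda>a. R a hs1, \<lambda>b. \<Delta> b [g1, g2]]"
    using coassoc[OF R_lin assms] by simp
  finally show ?thesis by (simp only: RR_snoc)
qed

lemma R_merge:
  assumes "lin_fun scale g1" "lin_fun scale g2" "\<forall>g\<in>set hs2. lin_fun scale g"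
  shows "R x (hs1 @ [g1, g2] @ hs2) = R x (hs1 @ [\<lambda>b. \<Delta> b [g1, g2]] @ hs2)"
proof -
  have "R x ((hs1 @ [g1, g2]) @ hs2) = \<Delta> x [\<lambda>a. R a (hs1 @ [g1, g2]), \<lambda>b. R b hs2]"
    by (rule R_split[OF assms(3), symmetric])
  also have "(\<lambda>a. R a (hs1 @ [g1, g2])) = (\<lambda>a. R a (hs1 @ [\<lambda>b. \<Delta> b [g1, g2]]))"
    using R_merge0[OF assms(1,2)] by auto
  also have "\<Delta> x [\<lambda>a. R a (hs1 @ [\<lambda>b. \<Delta> b [g1, g2]]), \<lambda>b. R b hs2] = R x ((hs1 @ [\<lambda>b. \<Delta> b [g1, g2]]) @ hs2)"
    by (rule R_split[OF assms(3)])
  finally show ?thesis by simp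
qed

lemma D_slot1:
  assumes "lin_fun scale f" 
  shows "\<exists>u. \<forall>h. lin_fun scale h \<longrightarrow> \<Delta> x [f, h] = h u"
proof -
  have ll: "lin_list scale 2 [f, f]" using assms by (simp add: lin_list_def)
  from tensor_slot[OF Dten ll, of 1] show ?thesis by simp
qed

lemma D_slot0:
  assumes "lin_fun scale g" 
  shows "\<exists>u. \<forall>h. lin_fun scale h \<longrightarrow> \<Delta> x [h, g] = h u"
proof -
  have ll: "lin_list scale 2 [g, g]" using assms by (simp add: lin_list_def)
  from tensor_slot[OF Dten ll, of 0] show ?thesis by simp
qed

lemma sep:
  assumes "x \<noteq> 0"
  shows "\<exists>f. lin_fun scale f \<and> f x = 1"
proof -
  interpret p: vector_space_pair scale "(*) :: 'k \<Rightarrow> 'k \<Rightarrow> 'k"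
    by (simp add: vector_space_pair_def vs vs_field)
  have "independent {x}" using assms by simp
  from p.linear_independent_extend[OF this, of "\<lambda>_. 1"] obtain g where
    "Vector_Spaces.linear scale (*) g" "g x = 1" by auto
  then show ?thesis unfolding lin_fun_def by blast
qed

lemma all_zero:
  assumes "\<And>f. lin_fun scale f \<Longrightarrow> f x = 0"
  shows "x = 0"
  using sep assms by force

end


lemma ptens2: "lin_fun scale f \<Longrightarrow> lin_fun scale g \<Longrightarrow> ptens scale [a, b] [f, g] = f a * g b"
  by (simp add: ptens_def lin_list_def numeral_2_eq_2 lessThan_Suc)

lemma lin_list2: "lin_list scale 2 fs \<longleftrightarrow> (\<exists>f g. fs = [f, g] \<and> lin_fun scale f \<and> lin_fun scale g)"
proof
  assume "lin_list scale 2 fs"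
  then have "length fs = 2" "\<forall>f\<in>set fs. lin_fun scale f" by (auto simp: lin_list_def)
  then show "\<exists>f g. fs = [f, g] \<and> lin_fun scale f \<and> lin_fun scale g"
    by (cases fs; cases "tl fs") (auto simp: numeral_2_eq_2)
qed (auto simp: lin_list_def)

locale coalE = coal +
  fixes e
  assumes De: "\<Delta> e = ptens scale [e, e]" and e_ne: "e \<noteq> 0"
begin

abbreviation "P \<equiv> prim scale \<Delta> e"

lemma De_eval: "lin_fun scale f \<Longrightarrow> lin_fun scale g \<Longrightarrow> \<Delta> e [f, g] = f e * g e"
  by (simp add: De ptens2)

lemma eps_e: "\<epsilon> e = 1"
proof -
  obtain f where f: "lin_fun scale f" "f e = 1" using sep e_ne by blast
  have "\<Delta> e [\<epsilon>, f] = f e" using counitL[OF f(1)] .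
  then show ?thesis using De_eval[OF eps_lin f(1)] f(2) by simp
qed

lemma prim_iff: "x \<in> P \<longleftrightarrow> (\<forall>f g. lin_fun scale f \<longrightarrow> lin_fun scale g \<longrightarrow>
    \<Delta> x [f, g] = f x * g e + f e * g x)"
proof
  assume "x \<in> P"
  then show "\<forall>f g. lin_fun scale f \<longrightarrow> lin_fun scale g \<longrightarrow> \<Delta> x [f, g] = f x * g e + f e * g x"
    by (auto simp: prim_def ptens2)
next
  assume H: "\<forall>f g. lin_fun scale f \<longrightarrow> lin_fun scale g \<longrightarrow> \<Delta> x [f, g] = f x * g e + f e * g x"
  have "\<Delta> x fs = ptens scale [x, e] fs + ptens scale [e, x] fs" for fs
  proof (cases "lin_list scale 2 fs")
    case True
    then obtain f g where "fs = [f, g]" "lin_fun scale f" "lin_fun scale g" using lin_list2 by blast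
    then show ?thesis using H by (simp add: ptens2)
  next
    case False
    then show ?thesis using tensors_out[OF Dten False] ptens_out[of "[x, e]" 2 scale fs] ptens_out[of "[e, x]" 2 scale fs] by simp
  qed
  then show "x \<in> P" by (simp add: prim_def)
qed

lemma D_zero: "\<Delta> 0 fs = 0"
  using Dscale[of 0 0 fs] by simp

lemma prim_subspace: "subspace P"
proof (rule subspaceI)
  show "0 \<in> P" by (simp add: prim_iff D_zero lin_fun_zero)
  show "x + y \<in> P" if "x \<in> P" "y \<in> P" for x y
    using that by (simp add: prim_iff Dadd lin_fun_add algebra_simps)
  show "scale c x \<in> P" if "x \<in> P" for c x
    using that by (simp add: prim_iff Dscale lin_fun_scale algebra_simps)
qed

lemma eps_prim: "p \<in> P \<Longrightarrow> \<epsilon> p = 0"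
proof -
  assume p: "p \<in> P"
  obtain f where f: "lin_fun scale f" "f e = 1" using sep e_ne by blast
  have "\<Delta> p [\<epsilon>, f] = f p" using counitL[OF f(1)] .
  moreover have "\<Delta> p [\<epsilon>, f] = \<epsilon> p * f e + \<epsilon> e * f p" using p f(1) eps_lin by (simp add: prim_iff)
  ultimately show ?thesis using f(2) eps_e by simp
qed

lemma e_notin: "e \<notin> P" using eps_prim eps_e by auto

lemma pi_exists: "\<exists>\<pi>. Vector_Spaces.linear scale scale \<pi> \<and> (\<forall>x. \<pi> x \<in> P) \<and> (\<forall>p\<in>P. \<pi> p = p) \<and> \<pi> e = 0"
proof -
  interpret pp: vector_space_pair scale scale by (simp add: vector_space_pair_def vs)
  obtain B0 where B0: "B0 \<subseteq> P" "independent B0" "P \<subseteq> span B0"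
    using maximal_independent_subset by blast
  have sB0: "span B0 = P" using B0 span_minimal[OF B0(1) prim_subspace] by auto
  have ind: "independent (insert e B0)" using B0(2) e_notin sB0 by (intro independent_insertI) auto
  define f where "f b = (if b \<in> B0 then b else 0)" for b
  obtain g where g: "Vector_Spaces.linear scale scale g" "\<forall>x\<in>insert e B0. g x = f x"
      "range g = span (f ` insert e B0)"
    using pp.linear_independent_extend_subspace[OF ind, of f] by blast
  have "f ` insert e B0 \<subseteq> insert 0 B0" by (auto simp: f_def)
  then have "range g \<subseteq> P" using g(3) span_mono sB0 by (metis span_insert_0)
  moreover have "\<forall>p\<in>P. g p = p"
  proof
    fix p assume "p \<in> P"
    then have "p \<in> span B0" using sB0 by simp
    then show "g p = p"
      using pp.linear_eq_on[OF g(1) linear_id, of p B0] g(2) e_notin B0(1) by (auto simp: f_def)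
  qed
  moreover have "g e = 0" using g(2) e_notin B0(1) f_def by auto
  ultimately show ?thesis using g(1) by blast
qed

end



lemma ptens_snoc:
  assumes "length vs = n" "lin_list scale (Suc n) fs"
  shows "ptens scale (vs @ [b]) fs = ptens scale vs (butlast fs) * (last fs) b"
proof -
  have fs: "fs = butlast fs @ [last fs]" using assms(2)
    by (metis append_butlast_last_id lin_list_def list.size(3) nat.distinct(1))
  have lb: "lin_list scale n (butlast fs)" using assms(2) unfolding lin_list_def
    by (auto dest: in_set_butlastD)
  have lenb: "length (butlast fs) = n" using lb by (simp add: lin_list_def)
  have "ptens scale (vs @ [b]) fs = (\<Prod>i<Suc n. (fs ! i) ((vs @ [b]) ! i))"
    using assms by (intro ptens_lin) auto
  also have "\<dots> = (\<Prod>i<n. (fs ! i) ((vs @ [b]) ! i)) * (fs ! n) b"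
    using assms(1) by (simp add: nth_append)
  also have "(\<Prod>i<n. (fs ! i) ((vs @ [b]) ! i)) = (\<Prod>i<n. (butlast fs ! i) (vs ! i))"
    using assms(1) lenb by (intro prod.cong) (auto simp: nth_append nth_butlast)
  also have "fs ! n = last fs" using lenb fs by (metis nth_append_length)
  finally show ?thesis using ptens_lin[OF assms(1) lb] by simp
qed

lemma tensors_ext:
  assumes "t \<in> tensors scale V n" "b \<in> V"
  shows "(\<lambda>fs. if lin_list scale (Suc n) fs then t (butlast fs) * (last fs) b else 0) \<in> tensors scale V (Suc n)"
proof -
  obtain m :: nat and c vs where t: "t = (\<lambda>fs. \<Sum>j<m. c j * ptens scale (vs j) fs)"
    "\<And>j. j < m \<Longrightarrow> length (vs j) = n" "\<And>j. j < m \<Longrightarrow> set (vs j) \<subseteq> V"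
    using assms(1) by (rule tensorsE) blast
  have A: "(\<lambda>fs. \<Sum>j<m. c j * ptens scale (vs j @ [b]) fs) \<in> tensors scale V (Suc n)"
    by (rule tensorsI) (use t assms(2) in auto)
  show ?thesis
  proof (rule tensors_cong[OF A])
    fix fs assume "lin_list scale (Suc n) fs"
    then show "(if lin_list scale (Suc n) fs then t (butlast fs) * last fs b else 0) =
        (\<Sum>j<m. c j * ptens scale (vs j @ [b]) fs)"
      using t by (auto simp: ptens_snoc sum_distrib_right mult.assoc intro!: sum.cong)
  qed simp
qed

lemma tensors_comp:
  assumes "t \<in> tensors scale V n" "\<And>x. p x \<in> W" "Vector_Spaces.linear scale scale p"
  shows "(\<lambda>fs. if lin_list scale n fs then t (map (\<lambda>f. f \<circ> p) fs) else 0) \<in> tensors scale W n"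
proof -
  obtain m :: nat and c vs where t: "t = (\<lambda>fs. \<Sum>j<m. c j * ptens scale (vs j) fs)"
    "\<And>j. j < m \<Longrightarrow> length (vs j) = n" "\<And>j. j < m \<Longrightarrow> set (vs j) \<subseteq> V"
    using assms(1) by (rule tensorsE) blast
  have A: "(\<lambda>fs. \<Sum>j<m. c j * ptens scale (map p (vs j)) fs) \<in> tensors scale W n"
    by (rule tensorsI) (use t assms(2) in auto)
  show ?thesis
  proof (rule tensors_cong[OF A])
    fix fs assume fs: "lin_list scale n fs"
    then have fs': "lin_list scale n (map (\<lambda>f. f \<circ> p) fs)"
      using lin_fun_comp[OF _ assms(3)] by (auto simp: lin_list_def)
    have "ptens scale (vs j) (map (\<lambda>f. f \<circ> p) fs) = ptens scale (map p (vs j)) fs" if "j < m" for j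
      using ptens_lin[OF t(2)[OF that] fs'] ptens_lin[of "map p (vs j)" n scale fs] fs t(2)[OF that]
      by (auto simp: lin_list_def intro!: prod.cong)
    then show "(if lin_list scale n fs then t (map (\<lambda>f. f \<circ> p) fs) else 0) =
        (\<Sum>j<m. c j * ptens scale (map p (vs j)) fs)"
      using fs t by (auto intro!: sum.cong)
  qed simp
qed

lemma ptens_len2: "length vs = 2 \<Longrightarrow> lin_fun scale f \<Longrightarrow> lin_fun scale g \<Longrightarrow>
   ptens scale vs [f, g] = f (vs ! 0) * g (vs ! 1)"
  by (simp add: ptens_def lin_list_def numeral_2_eq_2 lessThan_Suc)

context coal begin

lemma Rt: "(\<lambda>fs. if lin_list scale n fs then R x fs else 0) \<in> tensors scale UNIV n"
proof (induct n arbitrary: x)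
  case 0
  have A: "(\<lambda>fs. \<epsilon> x * ptens scale [] fs) \<in> tensors scale UNIV 0"
    by (intro tensors_scale tensors_ptens) auto
  show ?case
    by (rule tensors_cong[OF A]) (auto simp: lin_list_def ptens_def)
next
  case (Suc n)
  obtain m :: nat and c vs where D: "\<Delta> x = (\<lambda>fs. \<Sum>j<m. c j * ptens scale (vs j) fs)"
    "\<And>j. j < m \<Longrightarrow> length (vs j) = 2"
    using Dten[of x] by (rule tensorsE) blast
  let ?T = "\<lambda>a fs. if lin_list scale n fs then R a fs else 0"
  have A: "(\<lambda>fs. \<Sum>j\<in>{..<m}. c j * (if lin_list scale (Suc n) fs then ?T (vs j ! 0) (butlast fs) * (last fs) (vs j ! 1) else 0))
     \<in> tensors scale UNIV (Suc n)"
    by (intro tensors_sum tensors_scale tensors_ext Suc) auto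
  show ?case
  proof (rule tensors_cong[OF A])
    fix fs assume fs: "lin_list scale (Suc n) fs"
    have fse: "fs = butlast fs @ [last fs]" using fs
      by (metis append_butlast_last_id lin_list_def list.size(3) nat.distinct(1))
    have lb: "lin_list scale n (butlast fs)" using fs unfolding lin_list_def
      by (auto dest: in_set_butlastD)
    have lg: "lin_fun scale (last fs)" using fs fse unfolding lin_list_def
      by (metis in_set_conv_decomp)
    have "R x fs = \<Delta> x [\<lambda>a. R a (butlast fs), last fs]" by (subst fse) simp
    also have "\<dots> = (\<Sum>j<m. c j * (R (vs j ! 0) (butlast fs) * (last fs) (vs j ! 1)))"
      unfolding D using D(2) by (auto intro!: sum.cong simp: ptens_len2[OF _ R_lin lg])
    finally show "(if lin_list scale (Suc n) fs then R x fs else 0) =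
      (\<Sum>j\<in>{..<m}. c j * (if lin_list scale (Suc n) fs then ?T (vs j ! 0) (butlast fs) * (last fs) (vs j ! 1) else 0))"
      using fs lb by simp
  qed simp
qed

end



locale coal2 = coalE +
  fixes \<pi> L
  assumes pi_lin: "Vector_Spaces.linear scale scale \<pi>"
    and pi_P: "\<And>x. \<pi> x \<in> P" and pi_id: "\<And>p. p \<in> P \<Longrightarrow> \<pi> p = p" and pi_e: "\<pi> e = 0"
    and L_lin: "\<And>p. p \<in> P \<Longrightarrow> Vector_Spaces.linear scale scale (L p)"
    and L_e: "\<And>p. p \<in> P \<Longrightarrow> L p e = p"
    and L_D: "\<And>p x f g. p \<in> P \<Longrightarrow> lin_fun scale f \<Longrightarrow> lin_fun scale g \<Longrightarrow>
        \<Delta> (L p x) [f, g] = f (L p x) * g e + \<Delta> x [f, g \<circ> L p]"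
    and nilp: "\<And>x. \<epsilon> x = 0 \<Longrightarrow> \<exists>n. \<forall>fs. lin_list scale (n + 2) fs \<longrightarrow> dtil_iter \<Delta> e n x fs = 0"
begin

definition phi where
  "phi n x fs = (if lin_list scale n fs then R x (map (\<lambda>f. f \<circ> \<pi>) fs) else 0)"

abbreviation "EKe \<equiv> EK scale e"

lemma pi_add: "\<pi> (x + y) = \<pi> x + \<pi> y" using pi_lin by (simp add: linear_iff)
lemma pi_scale: "\<pi> (scale c x) = scale c (\<pi> x)" using pi_lin by (simp add: linear_iff)

lemma comp_lin: "lin_fun scale f \<Longrightarrow> lin_fun scale (f \<circ> \<pi>)"
  using lin_fun_comp[OF _ pi_lin] .

lemma lin_list_map: "lin_list scale n fs \<Longrightarrow> lin_list scale n (map (\<lambda>f. f \<circ> \<pi>) fs)"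
  using comp_lin by (auto simp: lin_list_def)

lemma EK_map: "\<forall>f\<in>set fs. lin_fun scale f \<Longrightarrow> EKe (map (\<lambda>f. f \<circ> \<pi>) fs)"
  using comp_lin by (auto simp: EK_def pi_e lin_fun_zero)

lemma EK_lin_list: "EKe hs \<Longrightarrow> lin_list scale (length hs) hs"
  by (auto simp: EK_def lin_list_def)

lemma R_e: "EKe hs \<Longrightarrow> hs \<noteq> [] \<Longrightarrow> R e hs = 0"
proof (induct hs rule: rev_induct)
  case (snoc g hs)
  then have "lin_fun scale g" "g e = 0" by (auto simp: EK_def)
  then show ?case by (simp add: De_eval R_lin)
qed simp

lemma phi_tensor: "phi n x \<in> tensors scale P n"
proof -
  have "(\<lambda>fs. if lin_list scale n fs then (\<lambda>fs. if lin_list scale n fs then R x fs else 0) (map (\<lambda>f. f \<circ> \<pi>) fs) else 0)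
     \<in> tensors scale P n"
    by (rule tensors_comp[OF Rt pi_P pi_lin])
  moreover have "(\<lambda>fs. if lin_list scale n fs then (\<lambda>fs. if lin_list scale n fs then R x fs else 0) (map (\<lambda>f. f \<circ> \<pi>) fs) else 0)
     = phi n x"
    by (auto simp: phi_def lin_list_map)
  ultimately show ?thesis by simp
qed

lemma phi_add: "phi n (x + y) fs = phi n x fs + phi n y fs"
  by (simp add: phi_def R_add)

lemma phi_scale: "phi n (scale c x) fs = c * phi n x fs"
  by (simp add: phi_def R_scale)

lemma phi_zero: "phi n 0 fs = 0"
  using phi_scale[of n 0 0 fs] by simp

lemma phi_sum: "phi n (\<Sum>j<(m::nat). scale (c j) (w j)) fs = (\<Sum>j<m. c j * phi n (w j) fs)"
  by (induct m) (auto simp: phi_zero phi_add phi_scale)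

lemma phi_morph:
  assumes "lin_list scale k fs" "lin_list scale m gs"
  shows "\<Delta> x [\<lambda>a. phi k a fs, \<lambda>b. phi m b gs] = phi (k + m) x (fs @ gs)"
proof -
  have "lin_list scale (k + m) (fs @ gs)" using assms by (auto simp: lin_list_def)
  moreover have "\<forall>g\<in>set (map (\<lambda>f. f \<circ> \<pi>) gs). lin_fun scale g"
    using lin_list_map[OF assms(2)] by (simp add: lin_list_def)
  ultimately show ?thesis using assms R_split[of "map (\<lambda>f. f \<circ> \<pi>) gs" x "map (\<lambda>f. f \<circ> \<pi>) fs"]
    by (simp add: phi_def)
qed

lemma phi_0: "phi 0 x [] = \<epsilon> x"
  by (simp add: phi_def lin_list_def)

definition Q where
  "Q k x \<longleftrightarrow> (\<forall>hs. length hs = k \<longrightarrow> EKe hs \<longrightarrow> R x hs = 0)"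

lemma dtil_R: "EKe hs \<Longrightarrow> length hs = n + 2 \<Longrightarrow> dtil_iter \<Delta> e n x hs = R x hs"
proof (induct n arbitrary: x hs)
  case 0
  then obtain f g where hs: "hs = [f, g]"
    by (auto simp: numeral_2_eq_2 length_Suc_conv)
  with 0 have fg: "lin_fun scale f" "lin_fun scale g" "f e = 0" "g e = 0" by (auto simp: EK_def)
  have "R x hs = R x ([f] @ [g])" using hs by simp
  also have "\<dots> = \<Delta> x [f, g]" using R_single_fun[OF fg(1)] by (simp only: RR_snoc)
  finally show ?case using hs fg by (simp add: dtil_def)
next
  case (Suc n)
  have hsne: "hs \<noteq> []" using Suc.prems(2) by auto
  have hse: "hs = butlast hs @ [last hs]" using hsne by simp
  have EKb: "EKe (butlast hs)" using Suc.prems(1) by (auto simp: EK_def dest: in_set_butlastD)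
  have g: "lin_fun scale (last hs)" "last hs e = 0" using Suc.prems(1) last_in_set[OF hsne] unfolding EK_def
    by blast+
  have lb: "length (butlast hs) = n + 2" using Suc.prems(2) by simp
  have IH: "(\<lambda>a. dtil_iter \<Delta> e n a (butlast hs)) = (\<lambda>a. R a (butlast hs))"
    using Suc.hyps[OF EKb lb] by auto
  have ne: "butlast hs \<noteq> []" using lb by (cases "butlast hs") auto
  have "dtil_iter \<Delta> e (Suc n) x hs = \<Delta> x [\<lambda>a. R a (butlast hs), last hs]"
    using R_e[OF EKb ne] g by (simp add: IH dtil_def)
  also have "\<dots> = R x hs" by (subst (2) hse) simp
  finally show ?case .
qed

lemma Q_up:
  assumes "1 \<le> k" "Q k x"
  shows "Q (Suc k) x"
  unfolding Q_def
proof (intro allI impI)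
  fix hs assume len: "length hs = Suc k" and EKh: "EKe hs"
  define hs1 where "hs1 = take (k - 1) hs"
  have d1: "drop (k - 1) hs = hs ! (k - 1) # drop k hs"
    using len assms(1) Cons_nth_drop_Suc[of "k - 1" hs] by simp
  have d2: "drop k hs = [hs ! k]"
    using len Cons_nth_drop_Suc[of k hs] by simp
  have hs: "hs = hs1 @ [hs ! (k - 1), hs ! k]"
    unfolding hs1_def using d1 d2 append_take_drop_id[of "k - 1" hs] by simp
  have g: "lin_fun scale (hs ! (k - 1))" "lin_fun scale (hs ! k)" "(hs ! (k - 1)) e = 0" "(hs ! k) e = 0"
    using EKh len assms(1) unfolding EK_def by (auto simp: nth_mem)
  have "R x hs = R x (hs1 @ [\<lambda>b. \<Delta> b [hs ! (k - 1), hs ! k]])"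
    by (subst hs) (rule R_merge0[OF g(1,2)])
  also have "\<dots> = 0"
  proof -
    have "EKe (hs1 @ [\<lambda>b. \<Delta> b [hs ! (k - 1), hs ! k]])"
      using EKh g D_lin De_eval[OF g(1,2)] unfolding EK_def hs1_def
      by (auto dest: in_set_takeD)
    moreover have "length (hs1 @ [\<lambda>b. \<Delta> b [hs ! (k - 1), hs ! k]]) = k"
      using len assms(1) by (simp add: hs1_def)
    ultimately show ?thesis using assms(2) unfolding Q_def by blast
  qed
  finally show "R x hs = 0" .
qed

lemma Q_mono:
  assumes "1 \<le> k" "Q k x"
  shows "k \<le> j \<Longrightarrow> Q j x"
proof (induct j)
  case 0 then show ?case using assms by simp
next
  case (Suc j)
  show ?case
  proof (cases "k \<le> j")
    case True then show ?thesis using Suc Q_up assms(1) by simp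
  next
    case False then show ?thesis using Suc assms by (simp add: le_Suc_eq)
  qed
qed

lemma Q_nil: "\<epsilon> x = 0 \<Longrightarrow> \<exists>n. Q (n + 2) x"
proof -
  assume "\<epsilon> x = 0"
  then obtain n where n: "\<forall>fs. lin_list scale (n + 2) fs \<longrightarrow> dtil_iter \<Delta> e n x fs = 0"
    using nilp by blast
  have "Q (n + 2) x" unfolding Q_def
  proof (intro allI impI)
    fix hs assume "length hs = n + 2" "EKe hs"
    then show "R x hs = 0" using n dtil_R EK_lin_list by metis
  qed
  then show ?thesis by blast
qed

lemma phi_e: "1 \<le> n \<Longrightarrow> phi n e fs = 0"
proof (cases "lin_list scale n fs")
  case True
  assume "1 \<le> n"
  then have "map (\<lambda>f. f \<circ> \<pi>) fs \<noteq> []" using True by (auto simp: lin_list_def)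
  moreover have "EKe (map (\<lambda>f. f \<circ> \<pi>) fs)" using True EK_map by (simp add: lin_list_def)
  ultimately show ?thesis using R_e True by (simp add: phi_def)
qed (simp add: phi_def)

lemma decomp: "x = (x - scale (\<epsilon> x) e) + scale (\<epsilon> x) e" and eps_decomp: "\<epsilon> (x - scale (\<epsilon> x) e) = 0"
  by (simp_all add: lin_fun_diff[OF eps_lin] lin_fun_scale[OF eps_lin] eps_e)

lemma fin_supp: "\<exists>N. \<forall>n\<ge>N. phi n x = (\<lambda>_. 0)"
proof -
  define x0 where "x0 = x - scale (\<epsilon> x) e"
  obtain N where N: "Q (N + 2) x0" using Q_nil eps_decomp x0_def by blast
  have "phi n x = (\<lambda>_. 0)" if "n \<ge> N + 2" for n
  proof
    fix fs
    have "phi n x fs = phi n x0 fs + \<epsilon> x * phi n e fs"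
      using decomp[of x] phi_add phi_scale x0_def by metis
    also have "phi n e fs = 0" using phi_e that by simp
    also have "phi n x0 fs = 0"
    proof (cases "lin_list scale n fs")
      case True
      have "Q n x0" using Q_mono[OF _ N that] by simp
      then show ?thesis using True EK_map[of fs] unfolding Q_def phi_def lin_list_def by simp
    qed (simp add: phi_def)
    finally show "phi n x fs = 0" by simp
  qed
  then show ?thesis by blast
qed

lemma D_v0_prim:
  assumes H: "\<And>g1 g2. lin_fun scale g1 \<Longrightarrow> lin_fun scale g2 \<Longrightarrow> g1 e = 0 \<Longrightarrow> g2 e = 0 \<Longrightarrow> \<Delta> v [g1, g2] = 0"
  shows "v - scale (\<epsilon> v) e \<in> P"
proof -
  define v0 where "v0 = v - scale (\<epsilon> v) e"
  have ev0: "\<epsilon> v0 = 0" using eps_decomp v0_def by simp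
  have H0: "\<Delta> v0 [g1, g2] = 0" if "lin_fun scale g1" "lin_fun scale g2" "g1 e = 0" "g2 e = 0" for g1 g2
  proof -
    have "\<Delta> v0 [g1, g2] = \<Delta> v [g1, g2] - \<epsilon> v * \<Delta> e [g1, g2]"
      unfolding v0_def using lin_fun_diff[OF D_lin, of v "scale (\<epsilon> v) e" "[g1, g2]"] Dscale by simp
    then show ?thesis using H[OF that] that De_eval[OF that(1,2)] by simp
  qed
  {
    fix f g assume f: "lin_fun scale f" and g: "lin_fun scale g"
    define f0 where "f0 a = f a - f e * \<epsilon> a" for a
    define g0 where "g0 a = g a - g e * \<epsilon> a" for a
    have f0: "lin_fun scale f0" "f0 e = 0" using lin_fun_comb[OF f eps_lin] eps_e
      by (auto simp: f0_def[abs_def])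
    have g0: "lin_fun scale g0" "g0 e = 0" using lin_fun_comb[OF g eps_lin] eps_e
      by (auto simp: g0_def[abs_def])
    obtain u where u: "\<forall>h. lin_fun scale h \<longrightarrow> \<Delta> v0 [h, g] = h u" using D_slot0[OF g] by blast
    obtain u' where u': "\<forall>h. lin_fun scale h \<longrightarrow> \<Delta> v0 [f0, h] = h u'" using D_slot1[OF f0(1)] by blast
    have "\<Delta> v0 [f, g] = f u" using u f by blast
    also have "\<dots> = f0 u + f e * \<epsilon> u" by (simp add: f0_def)
    also have "\<dots> = \<Delta> v0 [f0, g] + f e * \<Delta> v0 [\<epsilon>, g]" using u f0 eps_lin by simp
    also have "\<Delta> v0 [\<epsilon>, g] = g v0" using counitL[OF g] .
    also have "\<Delta> v0 [f0, g] = g u'" using u' g by blast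
    also have "\<dots> = g0 u' + g e * \<epsilon> u'" by (simp add: g0_def)
    also have "\<dots> = \<Delta> v0 [f0, g0] + g e * \<Delta> v0 [f0, \<epsilon>]" using u' g0 eps_lin by simp
    also have "\<Delta> v0 [f0, g0] = 0" using H0 f0 g0 by simp
    also have "\<Delta> v0 [f0, \<epsilon>] = f0 v0" using counitR[OF f0(1)] .
    also have "f0 v0 = f v0" using ev0 by (simp add: f0_def)
    finally have "\<Delta> v0 [f, g] = f v0 * g e + f e * g v0" by (simp add: algebra_simps)
  }
  then show ?thesis unfolding v0_def[symmetric] prim_iff by blast
qed

lemma pi_v: "\<pi> v = \<pi> (v - scale (\<epsilon> v) e)"
proof -
  have "\<pi> v = \<pi> (v - scale (\<epsilon> v) e) + scale (\<epsilon> v) (\<pi> e)"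
    by (metis decomp pi_add pi_scale)
  then show ?thesis by (simp add: pi_e)
qed

lemma Q_down:
  assumes phik: "\<forall>fs. phi k x fs = 0" and Qk1: "Q (Suc k) x"
  shows "Q k x"
  unfolding Q_def
proof (intro allI impI)
  fix hs assume len: "length hs = k" and EKh: "EKe hs"
  have lh: "lin_list scale k hs" using EK_lin_list EKh len by auto
  define T where "T = (\<lambda>fs. if lin_list scale k fs then R x fs else 0)"
  have T: "T \<in> tensors scale UNIV k" using Rt T_def by simp
  have step: "R x (map (\<lambda>f. f \<circ> \<pi>) (take j hs) @ drop j hs) = R x hs" if "j \<le> k" for j
    using that
  proof (induct j)
    case 0 show ?case by simp
  next
    case (Suc j)
    define A where "A = map (\<lambda>f. f \<circ> \<pi>) (take j hs)"
    define B where "B = drop (Suc j) hs"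
    define h where "h = hs ! j"
    have jk: "j < k" using Suc by simp
    have dj: "drop j hs = h # B" using jk len Cons_nth_drop_Suc[of j hs] unfolding h_def B_def by simp
    have tS: "map (\<lambda>f. f \<circ> \<pi>) (take (Suc j) hs) @ drop (Suc j) hs = A @ (h \<circ> \<pi>) # B"
      using jk len by (simp add: A_def B_def h_def take_Suc_conv_app_nth)
    have lA: "length A = j" using jk len by (simp add: A_def)
    have h: "lin_fun scale h" "h e = 0" using EKh jk len unfolding h_def EK_def by (auto simp: nth_mem)
    have EKA: "EKe A" unfolding A_def using EKh by (intro EK_map) (auto simp: EK_def dest: in_set_takeD)
    have EKB: "EKe B" unfolding B_def using EKh by (auto simp: EK_def dest: in_set_dropD)
    have ll: "lin_list scale k (A @ h # B)"
      using EKA EKB h lA len jk unfolding EK_def lin_list_def B_def by auto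
    obtain v where v: "\<forall>h'. lin_fun scale h' \<longrightarrow> T ((A @ h # B)[j := h']) = h' v"
      using tensor_slot[OF T ll jk] by blast
    have Tv: "R x (A @ h' # B) = h' v" if "lin_fun scale h'" for h'
    proof -
      have "lin_list scale k (A @ h' # B)" using lin_list_update[OF ll that, of j] lA by (simp add: list_update_append)
      then show ?thesis using v that lA unfolding T_def by auto
    qed
    have "v - scale (\<epsilon> v) e \<in> P"
    proof (rule D_v0_prim)
      fix g1 g2 assume g: "lin_fun scale g1" "lin_fun scale g2" "g1 e = 0" "g2 e = 0"
      have "\<Delta> v [g1, g2] = R x (A @ (\<lambda>b. \<Delta> b [g1, g2]) # B)" using Tv[OF D_lin] by simp
      also have "\<dots> = R x (A @ [g1, g2] @ B)"
        using R_merge[OF g(1,2), of B x A] EKB by (simp add: EK_def)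
      also have "\<dots> = 0"
      proof -
        have "EKe (A @ [g1, g2] @ B)" using EKA EKB g by (auto simp: EK_def)
        moreover have "length (A @ [g1, g2] @ B) = Suc k" using lA len jk by (simp add: B_def)
        ultimately show ?thesis using Qk1 unfolding Q_def by blast
      qed
      finally show "\<Delta> v [g1, g2] = 0" .
    qed
    then have pv: "\<pi> v = v - scale (\<epsilon> v) e" using pi_v[of v] pi_id by metis
    have "R x (A @ (h \<circ> \<pi>) # B) = (h \<circ> \<pi>) v" using Tv[OF comp_lin[OF h(1)]] .
    also have "\<dots> = h (v - scale (\<epsilon> v) e)" using pv by simp
    also have "\<dots> = h v" using h by (simp add: lin_fun_diff lin_fun_scale)
    also have "\<dots> = R x (A @ h # B)" using Tv[OF h(1)] by simp
    also have "A @ h # B = map (\<lambda>f. f \<circ> \<pi>) (take j hs) @ drop j hs" using dj A_def by simp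
    also have "R x (map (\<lambda>f. f \<circ> \<pi>) (take j hs) @ drop j hs) = R x hs" by (rule Suc.hyps) (use jk in simp)
    finally show ?case unfolding tS .
  qed
  have "R x hs = R x (map (\<lambda>f. f \<circ> \<pi>) hs)" using step[of k] len by simp
  also have "\<dots> = phi k x hs" using lh by (simp add: phi_def)
  also have "\<dots> = 0" using phik by simp
  finally show "R x hs = 0" .
qed

lemma phi_inj:
  assumes "\<forall>n. phi n x = (\<lambda>_. 0)"
  shows "x = 0"
proof -
  have ex: "\<epsilon> x = 0" using assms phi_0[of x] by (metis)
  obtain N where N: "Q (N + 2) x" using Q_nil[OF ex] by blast
  have Qd: "Q (N + 2 - d) x" for d
  proof (induct d)
    case 0 then show ?case using N by simp
  next
    case (Suc d)
    show ?case
    proof (cases "N + 2 - d = 0")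
      case True then show ?thesis using Suc by simp
    next
      case False
      then have "N + 2 - d = Suc (N + 2 - Suc d)" by simp
      then show ?thesis using Q_down[of "N + 2 - Suc d" x] Suc assms by metis
    qed
  qed
  have Q1: "Q 1 x" using Qd[of "N + 1"] by simp
  show "x = 0"
  proof (rule all_zero)
    fix f assume f: "lin_fun scale f"
    define f0 where "f0 a = f a - f e * \<epsilon> a" for a
    have f0: "lin_fun scale f0" "f0 e = 0" using lin_fun_comb[OF f eps_lin] eps_e
      by (auto simp: f0_def[abs_def])
    have "R x [f0] = 0" using Q1 f0 unfolding Q_def EK_def by auto
    then have "f0 x = 0" using R_single[OF f0(1)] by simp
    then show "f x = 0" using ex by (simp add: f0_def)
  qed
qed

lemma psi_R:
  assumes "set ps \<subseteq> P" "EKe hs"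
  shows "(length ps < length hs \<longrightarrow> R (psi L e ps) hs = 0) \<and>
         (length hs = length ps \<longrightarrow> R (psi L e ps) hs = (\<Prod>i<length hs. (hs ! i) (ps ! i)))"
  using assms
proof (induct ps arbitrary: hs rule: rev_induct)
  case Nil
  show ?case
  proof (cases "hs = []")
    case True then show ?thesis by (simp add: eps_e)
  next
    case False then show ?thesis using R_e Nil by simp
  qed
next
  case (snoc p ps)
  have p: "p \<in> P" and psP: "set ps \<subseteq> P" using snoc.prems by auto
  show ?case
  proof (cases "Suc (length ps) \<le> length hs")
    case False then show ?thesis by auto
  next
    case True
    define bl where "bl = butlast hs"
    define g where "g = last hs"
    have hsne: "hs \<noteq> []" using True by auto
    have hse: "hs = bl @ [g]" using hsne unfolding bl_def g_def by simp
    have EKb: "EKe bl" using snoc.prems(2) hse by (auto simp: EK_def)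
    have g: "lin_fun scale g" "g e = 0" using snoc.prems(2) hse by (auto simp: EK_def)
    define y where "y = psi L e ps"
    define F where "F = (\<lambda>a. R a bl)"
    have F: "lin_fun scale F" unfolding F_def by (rule R_lin)
    have g': "lin_fun scale (g \<circ> L p)" using lin_fun_comp[OF g(1) L_lin[OF p]] .
    define g'' where "g'' a = (g \<circ> L p) a - g p * \<epsilon> a" for a
    have g'': "lin_fun scale g''" "g'' e = 0" using lin_fun_comb[OF g' eps_lin, of "g p"] eps_e L_e[OF p]
      by (auto simp: g''_def[abs_def])
    obtain u where u: "\<forall>h. lin_fun scale h \<longrightarrow> \<Delta> y [F, h] = h u" using D_slot1[OF F] by blast
    have "R (psi L e (ps @ [p])) hs = \<Delta> (L p y) [F, g]" by (simp add: hse y_def F_def)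
    also have "\<dots> = F (L p y) * g e + \<Delta> y [F, g \<circ> L p]" using L_D[OF p F g(1)] .
    also have "\<dots> = \<Delta> y [F, g \<circ> L p]" using g(2) by simp
    also have "\<dots> = (g \<circ> L p) u" using u g' by blast
    also have "\<dots> = g'' u + g p * \<epsilon> u" by (simp add: g''_def)
    also have "\<dots> = \<Delta> y [F, g''] + g p * \<Delta> y [F, \<epsilon>]" using u g'' eps_lin by simp
    also have "\<Delta> y [F, \<epsilon>] = R y bl" using counitR[OF F] by (simp add: F_def)
    also have "\<Delta> y [F, g''] = R y (bl @ [g''])" by (simp add: F_def)
    finally have E: "R (psi L e (ps @ [p])) hs = R y (bl @ [g'']) + g p * R y bl" .
    have EKb2: "EKe (bl @ [g''])" using EKb g'' by (auto simp: EK_def)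
    have lbl: "length bl = length hs - 1" using hse by simp
    have lhs: "length hs = Suc (length bl)" using hse by simp
    have "length ps < length (bl @ [g''])" using True lhs by simp
    then have IH1: "R y (bl @ [g'']) = 0"
      using snoc.hyps[OF psP EKb2] unfolding y_def by blast
    show ?thesis
    proof (intro conjI impI)
      assume "length (ps @ [p]) < length hs"
      then have "R y bl = 0" using snoc.hyps[OF psP EKb] lbl unfolding y_def by auto
      then show "R (psi L e (ps @ [p])) hs = 0" using E IH1 by simp
    next
      assume len: "length hs = length (ps @ [p])"
      then have "R y bl = (\<Prod>i<length bl. (bl ! i) (ps ! i))"
        using snoc.hyps[OF psP EKb] lbl unfolding y_def by auto
      moreover have "(\<Prod>i<length hs. (hs ! i) ((ps @ [p]) ! i)) = (\<Prod>i<length bl. (bl ! i) (ps ! i)) * g p"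
      proof -
        have lb: "length bl = length ps" using len lhs by simp
        have "(\<Prod>i<length hs. (hs ! i) ((ps @ [p]) ! i)) = (\<Prod>i<Suc (length bl). (hs ! i) ((ps @ [p]) ! i))"
          using lhs by simp
        also have "\<dots> = (\<Prod>i<length bl. (hs ! i) ((ps @ [p]) ! i)) * (hs ! length bl) ((ps @ [p]) ! length bl)"
          by (rule prod.lessThan_Suc)
        also have "(\<Prod>i<length bl. (hs ! i) ((ps @ [p]) ! i)) = (\<Prod>i<length bl. (bl ! i) (ps ! i))"
          by (rule prod.cong) (auto simp: hse nth_append lb)
        also have "(hs ! length bl) ((ps @ [p]) ! length bl) = g p" using lb by (simp add: hse nth_append)
        finally show ?thesis .
      qed
      ultimately show "R (psi L e (ps @ [p])) hs = (\<Prod>i<length hs. (hs ! i) ((ps @ [p]) ! i))"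
        using E IH1 by (simp add: mult.commute)
    qed
  qed
qed

lemma phi_psi:
  assumes "set ps \<subseteq> P"
  shows "phi (length ps) (psi L e ps) = ptens scale ps"
proof
  fix fs show "phi (length ps) (psi L e ps) fs = ptens scale ps fs"
  proof (cases "lin_list scale (length ps) fs")
    case True
    have EKm: "EKe (map (\<lambda>f. f \<circ> \<pi>) fs)" using True EK_map by (simp add: lin_list_def)
    have len: "length fs = length ps" using True by (simp add: lin_list_def)
    have "phi (length ps) (psi L e ps) fs = (\<Prod>i<length fs. (fs ! i) (\<pi> (ps ! i)))"
      using True psi_R[OF assms EKm] len by (simp add: phi_def)
    also have "\<dots> = (\<Prod>i<length fs. (fs ! i) (ps ! i))"
      using assms len by (intro prod.cong) (auto simp: pi_id nth_mem subset_iff)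
    finally show ?thesis using ptens_lin[OF refl, of scale ps] True len by simp
  next
    case False then show ?thesis by (simp add: phi_def ptens_out)
  qed
qed

lemma phi_psi_high:
  assumes "set ps \<subseteq> P" "length ps < m"
  shows "phi m (psi L e ps) fs = 0"
proof (cases "lin_list scale m fs")
  case True
  have EKm: "EKe (map (\<lambda>f. f \<circ> \<pi>) fs)" using True EK_map by (simp add: lin_list_def)
  show ?thesis using True psi_R[OF assms(1) EKm] assms(2) by (simp add: phi_def lin_list_def)
qed (simp add: phi_def)

lemma phi_surj_aux:
  "(\<forall>n. t n \<in> tensors scale P n) \<Longrightarrow> (\<forall>n\<ge>N. t n = (\<lambda>_. 0)) \<Longrightarrow> (\<exists>x. \<forall>n. phi n x = t n)"
proof (induct N arbitrary: t)
  case 0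
  then have "\<forall>n. phi n 0 = t n" by (auto simp: phi_zero)
  then show ?case by blast
next
  case (Suc N)
  have tP: "\<forall>n. t n \<in> tensors scale P n" and t0: "\<forall>n\<ge>Suc N. t n = (\<lambda>_. 0)" using Suc.prems by auto
  obtain m :: nat and c vs where tN: "t N = (\<lambda>fs. \<Sum>j<m. c j * ptens scale (vs j) fs)"
    "\<And>j. j < m \<Longrightarrow> length (vs j) = N" "\<And>j. j < m \<Longrightarrow> set (vs j) \<subseteq> P"
    using tP[rule_format, of N] by (rule tensorsE) blast
  define y where "y = (\<Sum>j<m. scale (c j) (psi L e (vs j)))"
  have phiy: "phi n y fs = (\<Sum>j<m. c j * phi n (psi L e (vs j)) fs)" for n fs
    unfolding y_def by (rule phi_sum)
  have yN: "phi N y = t N"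
  proof
    fix fs
    have "phi N (psi L e (vs j)) fs = ptens scale (vs j) fs" if "j < m" for j
      using phi_psi[OF tN(3)[OF that]] tN(2)[OF that] by simp
    then show "phi N y fs = t N fs"
      unfolding phiy tN by (auto intro!: sum.cong)
  qed
  have yhigh: "phi n y = (\<lambda>_. 0)" if "n > N" for n
    using phi_psi_high tN(2,3) that by (auto simp: phiy intro!: sum.neutral)
  define t' where "t' n = (\<lambda>fs. t n fs - phi n y fs)" for n
  have t'P: "\<forall>n. t' n \<in> tensors scale P n"
    unfolding t'_def using tP phi_tensor by (auto intro!: tensors_diff)
  have t'0: "\<forall>n\<ge>N. t' n = (\<lambda>_. 0)"
  proof (intro allI impI)
    fix n assume "N \<le> n"
    then consider "n = N" | "n > N" by linarith
    then show "t' n = (\<lambda>_. 0)"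
    proof cases
      case 1 then show ?thesis by (simp add: t'_def yN)
    next
      case 2 then show ?thesis using t0 yhigh[OF 2] by (auto simp: t'_def)
    qed
  qed
  obtain x' where x': "\<forall>n. phi n x' = t' n" using Suc.hyps[OF t'P t'0] by blast
  have "\<forall>n. phi n (x' + y) = t n"
    using x' by (auto simp: phi_add t'_def)
  then show ?case by blast
qed

lemma phi_surj:
  assumes "\<forall>n. t n \<in> tensors scale P n" "finite {n. t n \<noteq> (\<lambda>_. 0)}"
  shows "\<exists>x. \<forall>n. phi n x = t n"
proof -
  obtain N where "\<forall>n\<in>{n. t n \<noteq> (\<lambda>_. 0)}. n < N" using assms(2) finite_nat_set_iff_bounded by blast
  then have "\<forall>n\<ge>N. t n = (\<lambda>_. 0)" by auto
  then show ?thesis using phi_surj_aux assms(1) by blast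
qed

lemma phi_fin: "finite {n. phi n x \<noteq> (\<lambda>_. 0)}"
proof -
  obtain N where "\<forall>n\<ge>N. phi n x = (\<lambda>_. 0)" using fin_supp by blast
  then have "{n. phi n x \<noteq> (\<lambda>_. 0)} \<subseteq> {..<N}" by (auto simp: not_less[symmetric])
  then show ?thesis using finite_subset by blast
qed

end

theorem mainTheorem11:
  fixes scale :: "'k::field \<Rightarrow> 'c::ab_group_add \<Rightarrow> 'c"
    and \<Delta> :: "'c \<Rightarrow> ('c \<Rightarrow> 'k) list \<Rightarrow> 'k"
    and \<epsilon> :: "'c \<Rightarrow> 'k"
    and e :: 'c
  assumes coalg: "coalgebra scale \<Delta> \<epsilon>"
    and grouplike: "e \<noteq> 0" "\<Delta> e = ptens scale [e, e]"
    and Lex: "\<exists>L :: 'c \<Rightarrow> 'c \<Rightarrow> 'c.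
            (\<forall>p\<in>prim scale \<Delta> e. \<forall>q\<in>prim scale \<Delta> e. L (p + q) = (\<lambda>x. L p x + L q x))
          \<and> (\<forall>p\<in>prim scale \<Delta> e. \<forall>a. L (scale a p) = (\<lambda>x. scale a (L p x)))
          \<and> (\<forall>p\<in>prim scale \<Delta> e. Vector_Spaces.linear scale scale (L p))
          \<and> (\<forall>p\<in>prim scale \<Delta> e. L p e = p)
          \<and> (\<forall>p\<in>prim scale \<Delta> e. \<forall>x f g. lin_fun scale f \<and> lin_fun scale g \<longrightarrow>
                \<Delta> (L p x) [f, g] = f (L p x) * g e + \<Delta> x [f, g \<circ> L p])"
    and nilp: "\<forall>x. \<epsilon> x = 0 \<longrightarrow> (\<exists>n. \<forall>fs. lin_list scale (n + 2) fs \<longrightarrow> dtil_iter \<Delta> e n x fs = 0)"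
  shows "\<exists>\<phi> :: nat \<Rightarrow> 'c \<Rightarrow> ('c \<Rightarrow> 'k) list \<Rightarrow> 'k.
       (\<forall>n x. \<phi> n x \<in> tensors scale (prim scale \<Delta> e) n)
     \<and> (\<forall>n x y fs. \<phi> n (x + y) fs = \<phi> n x fs + \<phi> n y fs)
     \<and> (\<forall>n a x fs. \<phi> n (scale a x) fs = a * \<phi> n x fs)
     \<and> (\<forall>x. finite {n. \<phi> n x \<noteq> (\<lambda>_. 0)})
     \<and> (\<forall>x. (\<forall>n. \<phi> n x = (\<lambda>_. 0)) \<longrightarrow> x = 0)
     \<and> (\<forall>t. (\<forall>n. t n \<in> tensors scale (prim scale \<Delta> e) n) \<and> finite {n. t n \<noteq> (\<lambda>_. 0)}
            \<longrightarrow> (\<exists>x. \<forall>n. \<phi> n x = t n))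
     \<and> (\<forall>x k m fs gs. lin_list scale k fs \<and> lin_list scale m gs \<longrightarrow>
            \<Delta> x [(\<lambda>a. \<phi> k a fs), (\<lambda>b. \<phi> m b gs)] = \<phi> (k + m) x (fs @ gs))
     \<and> (\<forall>x. \<phi> 0 x [] = \<epsilon> x)"
  proof -
  have cd: "vector_space scale" "\<forall>x. \<Delta> x \<in> tensors scale UNIV 2"
    "\<forall>x y fs. \<Delta> (x + y) fs = \<Delta> x fs + \<Delta> y fs"
    "\<forall>a x fs. \<Delta> (scale a x) fs = a * \<Delta> x fs" "lin_fun scale \<epsilon>"
    "\<forall>x f g h. lin_fun scale f \<and> lin_fun scale g \<and> lin_fun scale h \<longrightarrow>
        \<Delta> x [(\<lambda>a. \<Delta> a [f, g]), h] = \<Delta> x [f, (\<lambda>b. \<Delta> b [g, h])]"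
    "\<forall>x f. lin_fun scale f \<longrightarrow> \<Delta> x [\<epsilon>, f] = f x \<and> \<Delta> x [f, \<epsilon>] = f x"
    using coalg unfolding coalgebra_def by blast+
  interpret c: coalE scale \<Delta> \<epsilon> e
  proof (intro coalE.intro coal.intro coal_axioms.intro coalE_axioms.intro)
    show "vector_space scale" by (rule cd(1))
  qed (use cd grouplike in auto)
  obtain \<pi> where pi: "Vector_Spaces.linear scale scale \<pi>" "\<forall>x. \<pi> x \<in> prim scale \<Delta> e"
    "\<forall>p\<in>prim scale \<Delta> e. \<pi> p = p" "\<pi> e = 0"
    using c.pi_exists by blast
  obtain L :: "'c \<Rightarrow> 'c \<Rightarrow> 'c" where L:
      "\<forall>p\<in>prim scale \<Delta> e. Vector_Spaces.linear scale scale (L p)"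
      "\<forall>p\<in>prim scale \<Delta> e. L p e = p"
      "\<forall>p\<in>prim scale \<Delta> e. \<forall>x f g. lin_fun scale f \<and> lin_fun scale g \<longrightarrow>
                \<Delta> (L p x) [f, g] = f (L p x) * g e + \<Delta> x [f, g \<circ> L p]"
    using Lex by blast
  interpret c2: coal2 scale \<Delta> \<epsilon> e \<pi> L
  proof (intro coal2.intro coal2_axioms.intro)
    show "coalE scale \<Delta> \<epsilon> e" by (rule c.coalE_axioms)
  qed (use pi L nilp in auto)
  show ?thesis
  proof (intro exI[of _ c2.phi] conjI allI impI)
    show "c2.phi n x \<in> tensors scale (prim scale \<Delta> e) n" for n x by (rule c2.phi_tensor)
    show "c2.phi n (x + y) fs = c2.phi n x fs + c2.phi n y fs" for n x y fs by (rule c2.phi_add)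
    show "c2.phi n (scale a x) fs = a * c2.phi n x fs" for n a x fs by (rule c2.phi_scale)
    show "finite {n. c2.phi n x \<noteq> (\<lambda>_. 0)}" for x by (rule c2.phi_fin)
    show "x = 0" if "\<forall>n. c2.phi n x = (\<lambda>_. 0)" for x using c2.phi_inj that by blast
    show "\<exists>x. \<forall>n. c2.phi n x = t n"
      if "(\<forall>n. t n \<in> tensors scale (prim scale \<Delta> e) n) \<and> finite {n. t n \<noteq> (\<lambda>_. 0)}" for t
      using c2.phi_surj that by blast
    show "\<Delta> x [\<lambda>a. c2.phi k a fs, \<lambda>b. c2.phi m b gs] = c2.phi (k + m) x (fs @ gs)"
      if "lin_list scale k fs \<and> lin_list scale m gs" for x k m fs gs
      using c2.phi_morph that by blast
    show "c2.phi 0 x [] = \<epsilon> x" for x by (rule c2.phi_0)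
  qed
qed

end
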